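(* Let $\mathcal{M}\subseteq\mathbb{S}^n$ and $B\in\mathbb{S}^n$. If $\mathcal{S}(\mathcal{M})$ is rank-one generated, then $$\inf_{x\in\mathbb{R}^n}\{x^\top M_0x:\ x^\top Mx\ge0\ \forall M\in\mathcal{M},\ x^\top Bx=1\}=\inf_{X\in\mathbb{S}^n}\{\langle M_0,X\rangle:\ \langle M,X\rangle\ge0\ \forall M\in\mathcal{M},\ \langle B,X\rangle=1,\ X\succeq0\}$$ for all $M_0\in\mathbb{S}^n$ for which the optimal value of the right-hand (SDP) problem is bounded from below. In particular, this equality holds whenever the feasible domain of the right-hand problem is bounded.
   Context: $\mathbb{S}^n$ denotes real symmetric $n\times n$ matrices with $\langle A,B\rangle=\mathrm{tr}(AB)$, $\mathbb{S}^n_+$ the PSD cone, $X\succeq0$ means $X$ is PSD. For $\mathcal{M}\subseteq\mathbb{S}^n$, $\mathcal{S}(\mathcal{M})=\{X\in\mathbb{S}^n_+:\langle M,X\rangle\ge0\ \forall M\in\mathcal{M}\}$. A closed convex cone $\mathcal{S}\subseteq\mathbb{S}^n_+$ is rank-one generated (ROG) if $\mathcal{S}=\mathrm{conv}(\mathcal{S}\cap\{xx^\top:x\in\mathbb{R}^n\})$. *)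

theory Defs
  imports "HOL-Analysis.Analysis"
begin

definition sym_mat :: "real^'n^'n \<Rightarrow> bool" where
  "sym_mat A \<longleftrightarrow> transpose A = A"

definition inner_mat :: "real^'n^'n \<Rightarrow> real^'n^'n \<Rightarrow> real" where
  "inner_mat A B = trace (A ** B)"

definition psd :: "real^'n^'n \<Rightarrow> bool" where
  "psd X \<longleftrightarrow> sym_mat X \<and> (\<forall>x. 0 \<le> x \<bullet> (X *v x))"

definition outer :: "real^'n \<Rightarrow> real^'n^'n" where
  "outer x = (\<chi> i j. x $ i * x $ j)"

definition S_cone :: "(real^'n^'n) set \<Rightarrow> (real^'n^'n) set" where
  "S_cone \<M> = {X. psd X \<and> (\<forall>M\<in>\<M>. 0 \<le> inner_mat M X)}"

definition ROG :: "(real^'n^'n) set \<Rightarrow> bool" where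
  "ROG S \<longleftrightarrow> S = convex hull (S \<inter> range outer)"

end

theory Submission
  imports Defs
begin

lemma inner_mat_expand: fixes A B X Y :: "real^'n^'n" and x :: "real^'n" shows "inner_mat A X = (\<Sum>i\<in>UNIV. \<Sum>k\<in>UNIV. A$i$k * X$k$i)"
  by (simp add: inner_mat_def trace_def matrix_matrix_mult_def)

lemma inner_mat_add: fixes A B X Y :: "real^'n^'n" and x :: "real^'n" shows "inner_mat A (X + Y) = inner_mat A X + inner_mat A Y"
  by (simp add: inner_mat_expand algebra_simps sum.distrib)

lemma inner_mat_scale: fixes A B X Y :: "real^'n^'n" and x :: "real^'n" shows "inner_mat A (c *\<^sub>R X) = c * inner_mat A X"
  by (simp add: inner_mat_expand sum_distrib_left algebra_simps)

lemma inner_mat_sum: fixes A B X Y :: "real^'n^'n" and x :: "real^'n" assumes "finite S" shows "inner_mat A (\<Sum>Z\<in>S. f Z) = (\<Sum>Z\<in>S. inner_mat A (f Z))"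
  using assms by (induct S rule: finite_induct) (auto simp: inner_mat_add, simp add: inner_mat_expand)

lemma inner_mat_outer: fixes A B X Y :: "real^'n^'n" and x :: "real^'n" shows "inner_mat A (outer x) = x \<bullet> (A *v x)"
  by (simp add: inner_mat_expand outer_def inner_vec_def matrix_vector_mult_def sum_distrib_left algebra_simps)

lemma quad_add: fixes A B X Y :: "real^'n^'n" and x :: "real^'n" shows "x \<bullet> ((A + B) *v x) = x \<bullet> (A *v x) + x \<bullet> (B *v x)"
  by (simp add: inner_vec_def matrix_vector_mult_def sum.distrib algebra_simps)

lemma quad_scale: fixes A B X Y :: "real^'n^'n" and x :: "real^'n" shows "x \<bullet> ((c *\<^sub>R A) *v x) = c * (x \<bullet> (A *v x))"
proof -
  have "(c *\<^sub>R A) *v x = c *\<^sub>R (A *v x)" by (simp add: vec_eq_iff matrix_vector_mult_def sum_distrib_left mult.assoc)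
  then show ?thesis by simp
qed

lemma quad_scale2: fixes A B X Y :: "real^'n^'n" and x :: "real^'n" shows "(c *\<^sub>R x) \<bullet> (A *v (c *\<^sub>R x)) = c^2 * (x \<bullet> (A *v x))"
proof -
  have "A *v (c *\<^sub>R x) = c *\<^sub>R (A *v x)" by (simp add: vec_eq_iff matrix_vector_mult_def sum_distrib_left algebra_simps)
  then show ?thesis by (simp add: power2_eq_square)
qed

lemma sym_add: fixes A B X Y :: "real^'n^'n" and x :: "real^'n" shows "sym_mat A \<Longrightarrow> sym_mat B \<Longrightarrow> sym_mat (A + B)"
  by (simp add: sym_mat_def transpose_def vec_eq_iff)

lemma sym_scale: fixes A B X Y :: "real^'n^'n" and x :: "real^'n" shows "sym_mat A \<Longrightarrow> sym_mat (c *\<^sub>R A)"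
  by (simp add: sym_mat_def transpose_def vec_eq_iff)

lemma psd_add: fixes A B X Y :: "real^'n^'n" and x :: "real^'n" shows "psd A \<Longrightarrow> psd B \<Longrightarrow> psd (A + B)"
  by (simp add: psd_def sym_add quad_add add_nonneg_nonneg)

lemma psd_scale: fixes A B X Y :: "real^'n^'n" and x :: "real^'n" shows "psd A \<Longrightarrow> 0 \<le> c \<Longrightarrow> psd (c *\<^sub>R A)"
  by (simp add: psd_def sym_scale quad_scale)

lemma psd_outer: fixes A B X Y :: "real^'n^'n" and x :: "real^'n" shows "psd (outer x)"
proof -
  have "z \<bullet> (outer x *v z) = (x \<bullet> z)^2" for z
    by (simp add: outer_def inner_vec_def matrix_vector_mult_def power2_eq_square sum_distrib_left sum_distrib_right algebra_simps)
  then show ?thesis by (simp add: psd_def sym_mat_def transpose_def vec_eq_iff outer_def)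
qed


lemma key:
  fixes \<M> :: "(real^'n^'n) set" and B M0 X :: "real^'n^'n"
  assumes rog: "ROG (S_cone \<M>)"
    and bd: "\<forall>X. sym_mat X \<and> psd X \<and> (\<forall>M\<in>\<M>. 0 \<le> inner_mat M X) \<and> inner_mat B X = 1
                     \<longrightarrow> c \<le> inner_mat M0 X"
    and XP: "sym_mat X" "\<forall>M\<in>\<M>. 0 \<le> inner_mat M X" "inner_mat B X = 1" "psd X"
  shows "Inf ((\<lambda>x. ereal (x \<bullet> (M0 *v x))) `
                   {x. (\<forall>M\<in>\<M>. 0 \<le> x \<bullet> (M *v x)) \<and> x \<bullet> (B *v x) = 1}) \<le> ereal (inner_mat M0 X)"
    (is "?I \<le> _")
proof -
  let ?Q = "{x. (\<forall>M\<in>\<M>. 0 \<le> x \<bullet> (M *v x)) \<and> x \<bullet> (B *v x) = 1}"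
  have "X \<in> S_cone \<M>" using XP by (simp add: S_cone_def)
  then have "X \<in> convex hull (S_cone \<M> \<inter> range outer)" using rog by (simp add: ROG_def)
  then obtain S u where fS: "finite S" and SS: "S \<subseteq> S_cone \<M> \<inter> range outer"
    and u0: "\<forall>Z\<in>S. 0 \<le> u Z" and su: "sum u S = 1" and Xeq: "(\<Sum>Z\<in>S. u Z *\<^sub>R Z) = X"
    unfolding convex_hull_explicit by blast
  define b where "b Z = u Z * inner_mat B Z" for Z
  define m where "m Z = u Z * inner_mat M0 Z" for Z
  have sb: "sum b S = 1"
    using XP(3) unfolding Xeq[symmetric] by (simp add: inner_mat_sum[OF fS] inner_mat_scale b_def)
  have sm: "sum m S = inner_mat M0 X"
    unfolding Xeq[symmetric] by (simp add: inner_mat_sum[OF fS] inner_mat_scale m_def)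
  define P' where "P' = {Z\<in>S. 0 < b Z}"
  have fP': "finite P'" using fS by (simp add: P'_def)
  have neP': "P' \<noteq> {}"
  proof
    assume "P' = {}"
    then have "\<forall>Z\<in>S. b Z \<le> 0" by (auto simp: P'_def)
    then have "sum b S \<le> 0" by (simp add: sum_nonpos)
    with sb show False by simp
  qed
  define r where "r Z = m Z / b Z" for Z
  define rs where "rs = Min (r ` P')"
  have ratio: "?I \<le> ereal (r Z)" if ZP: "Z \<in> P'" for Z
  proof -
    from ZP have ZS: "Z \<in> S" and bpos: "0 < b Z" by (auto simp: P'_def)
    with SS obtain x where Zx: "Z = outer x" and ZC: "Z \<in> S_cone \<M>" by auto
    have uZ: "0 < u Z" using u0 ZS bpos by (metis b_def less_eq_real_def mult_zero_left order_less_irrefl)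
    define \<beta> where "\<beta> = x \<bullet> (B *v x)"
    have "b Z = u Z * \<beta>" by (simp add: b_def Zx inner_mat_outer \<beta>_def)
    then have bp: "0 < \<beta>" using bpos uZ by (simp add: zero_less_mult_iff)
    define y where "y = (1 / sqrt \<beta>) *\<^sub>R x"
    have sq: "(1 / sqrt \<beta>)^2 = 1 / \<beta>" using bp by (simp add: power_divide)
    have yQ: "y \<in> ?Q"
    proof -
      have "0 \<le> y \<bullet> (M *v y)" if "M \<in> \<M>" for M
      proof -
        have "0 \<le> x \<bullet> (M *v x)" using ZC that by (simp add: S_cone_def Zx inner_mat_outer)
        then show ?thesis unfolding y_def quad_scale2 sq using bp by simp
      qed
      moreover have "y \<bullet> (B *v y) = 1" unfolding y_def quad_scale2 sq using bp by (simp add: \<beta>_def)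
      ultimately show ?thesis by simp
    qed
    have "y \<bullet> (M0 *v y) = r Z"
      unfolding y_def quad_scale2 sq r_def m_def b_def Zx inner_mat_outer using uZ Zx
      by (simp add: \<beta>_def)
    have "?I \<le> ereal (y \<bullet> (M0 *v y))" by (rule INF_lower[OF yQ])
    then show ?thesis using \<open>y \<bullet> (M0 *v y) = r Z\<close> by simp
  qed
  obtain j where jP: "j \<in> P'" and rj: "r j = rs"
  proof -
    have "rs \<in> r ` P'" unfolding rs_def using fP' neP' by (intro Min_in) auto
    then show ?thesis using that by blast
  qed
  have rsle: "rs \<le> r Z" if "Z \<in> P'" for Z using fP' that unfolding rs_def by simp
  have low: "b Z * rs \<le> m Z" if ZS: "Z \<in> S" for Z
  proof (cases "0 < b Z")
    case True
    then have "Z \<in> P'" using ZS by (simp add: P'_def)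
    then have "b Z * rs \<le> b Z * r Z" using True rsle by (simp add: mult_left_mono)
    also have "b Z * r Z = m Z" using True by (simp add: r_def)
    finally show ?thesis .
  next
    case False
    from jP have jS: "j \<in> S" and bj: "0 < b j" by (auto simp: P'_def)
    define \<alpha> where "\<alpha> = - b Z / b j"
    have a0: "0 \<le> \<alpha>" using False bj by (simp add: \<alpha>_def divide_nonpos_pos)
    have ZC: "Z \<in> S_cone \<M>" and jC: "j \<in> S_cone \<M>" using SS ZS jS by auto
    define d where "d = m Z + \<alpha> * m j"
    have feas: "c \<le> inner_mat M0 X + t * d" if t0: "0 \<le> t" for t
    proof -
      define Xt where "Xt = X + (t * u Z) *\<^sub>R Z + (t * \<alpha> * u j) *\<^sub>R j"
      have c1: "0 \<le> t * u Z" using t0 u0 ZS by simp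
      have c2: "0 \<le> t * \<alpha> * u j" using t0 u0 jS a0 by simp
      have psdZ: "psd Z" and psdj: "psd j" using ZC jC by (auto simp: S_cone_def)
      have "psd Xt" unfolding Xt_def
        by (intro psd_add psd_scale XP psdZ psdj c1 c2)
      moreover then have "sym_mat Xt" by (simp add: psd_def)
      moreover have "0 \<le> inner_mat M Xt" if "M \<in> \<M>" for M
      proof -
        have "0 \<le> inner_mat M Z" "0 \<le> inner_mat M j" using ZC jC that by (auto simp: S_cone_def)
        then show ?thesis unfolding Xt_def inner_mat_add inner_mat_scale
          using XP(2) that c1 c2 by (simp add: add_nonneg_nonneg)
      qed
      moreover have "inner_mat B Xt = 1"
      proof -
        have "\<alpha> * b j = - b Z" using bj by (simp add: \<alpha>_def)
        then have "t * \<alpha> * u j * inner_mat B j = - (t * u Z * inner_mat B Z)"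
          unfolding b_def by (metis mult.assoc mult.commute mult_minus_right)
        then show ?thesis unfolding Xt_def inner_mat_add inner_mat_scale XP(3) by simp
      qed
      ultimately have "c \<le> inner_mat M0 Xt" using bd by blast
      also have "inner_mat M0 Xt = inner_mat M0 X + t * d"
        unfolding Xt_def inner_mat_add inner_mat_scale d_def m_def by (simp add: algebra_simps)
      finally show ?thesis .
    qed
    have d0: "0 \<le> d"
    proof (rule ccontr)
      assume "\<not> 0 \<le> d"
      then have dn: "d < 0" by simp
      define t where "t = (\<bar>inner_mat M0 X - c\<bar> + 1) / (- d)"
      have "0 \<le> t" using dn by (simp add: t_def divide_nonneg_neg)
      have "t * d = - (\<bar>inner_mat M0 X - c\<bar> + 1)" using dn by (simp add: t_def)
      with feas[OF \<open>0 \<le> t\<close>] show False by linarith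
    qed
    have "b Z * rs = b Z * (m j / b j)" using rj by (simp add: r_def)
    also have "\<dots> = - \<alpha> * m j" using bj by (simp add: \<alpha>_def)
    also have "\<dots> \<le> m Z" using d0 by (simp add: d_def)
    finally show ?thesis .
  qed
  have "rs = (\<Sum>Z\<in>S. b Z * rs)" using sb by (simp add: sum_distrib_right[symmetric])
  also have "\<dots> \<le> sum m S" using low by (simp add: sum_mono)
  finally have "rs \<le> inner_mat M0 X" using sm by simp
  moreover have "?I \<le> ereal rs" using ratio[OF jP] rj by simp
  ultimately show ?thesis by (meson ereal_less_eq(3) order_trans)
qed


lemma eq_main:
  fixes \<M> :: "(real^'n^'n) set" and B M0 :: "real^'n^'n"
  assumes rog: "ROG (S_cone \<M>)"
    and bd: "\<forall>X. sym_mat X \<and> psd X \<and> (\<forall>M\<in>\<M>. 0 \<le> inner_mat M X) \<and> inner_mat B X = 1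
                     \<longrightarrow> c \<le> inner_mat M0 X"
  shows "Inf ((\<lambda>x. ereal (x \<bullet> (M0 *v x))) `
                   {x. (\<forall>M\<in>\<M>. 0 \<le> x \<bullet> (M *v x)) \<and> x \<bullet> (B *v x) = 1})
          = Inf ((\<lambda>X. ereal (inner_mat M0 X)) `
                   {X. sym_mat X \<and> (\<forall>M\<in>\<M>. 0 \<le> inner_mat M X) \<and> inner_mat B X = 1 \<and> psd X})"
proof (rule antisym)
  show "Inf ((\<lambda>x. ereal (x \<bullet> (M0 *v x))) `
                   {x. (\<forall>M\<in>\<M>. 0 \<le> x \<bullet> (M *v x)) \<and> x \<bullet> (B *v x) = 1})
        \<le> Inf ((\<lambda>X. ereal (inner_mat M0 X)) `
                   {X. sym_mat X \<and> (\<forall>M\<in>\<M>. 0 \<le> inner_mat M X) \<and> inner_mat B X = 1 \<and> psd X})"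
    by (rule INF_greatest) (use key[OF rog bd] in auto)
  show "Inf ((\<lambda>X. ereal (inner_mat M0 X)) `
                   {X. sym_mat X \<and> (\<forall>M\<in>\<M>. 0 \<le> inner_mat M X) \<and> inner_mat B X = 1 \<and> psd X})
        \<le> Inf ((\<lambda>x. ereal (x \<bullet> (M0 *v x))) `
                   {x. (\<forall>M\<in>\<M>. 0 \<le> x \<bullet> (M *v x)) \<and> x \<bullet> (B *v x) = 1})"
  proof (rule INF_greatest)
    fix x assume xQ: "x \<in> {x. (\<forall>M\<in>\<M>. 0 \<le> x \<bullet> (M *v x)) \<and> x \<bullet> (B *v x) = 1}"
    have "outer x \<in> {X. sym_mat X \<and> (\<forall>M\<in>\<M>. 0 \<le> inner_mat M X) \<and> inner_mat B X = 1 \<and> psd X}"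
      using xQ psd_outer[of x] by (auto simp: inner_mat_outer psd_def)
    then show "Inf ((\<lambda>X. ereal (inner_mat M0 X)) `
                   {X. sym_mat X \<and> (\<forall>M\<in>\<M>. 0 \<le> inner_mat M X) \<and> inner_mat B X = 1 \<and> psd X})
        \<le> ereal (x \<bullet> (M0 *v x))"
      by (rule INF_lower2) (simp add: inner_mat_outer)
  qed
qed

lemma bounded_lb:
  fixes P :: "(real^'n^'n) set" and M0 :: "real^'n^'n"
  assumes "bounded P"
  shows "\<exists>c. \<forall>X\<in>P. c \<le> inner_mat M0 X"
proof -
  obtain a where a: "\<forall>X\<in>P. norm X \<le> a" using assms bounded_iff by blast
  have "\<bar>inner_mat M0 X\<bar> \<le> (\<Sum>i\<in>UNIV. \<Sum>k\<in>UNIV. \<bar>M0$i$k\<bar> * a)" if XP: "X \<in> P" for X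
  proof -
    have ent: "\<bar>X$k$i\<bar> \<le> a" for k i
    proof -
      have "norm (X$k$i) \<le> norm (X$k)" by (rule Finite_Cartesian_Product.norm_nth_le)
      also have "\<dots> \<le> norm X" by (rule Finite_Cartesian_Product.norm_nth_le)
      moreover have "norm X \<le> a" using a XP by blast
      ultimately show ?thesis unfolding real_norm_def by linarith
    qed
    have "\<bar>inner_mat M0 X\<bar> \<le> (\<Sum>i\<in>UNIV. \<bar>\<Sum>k\<in>UNIV. M0$i$k * X$k$i\<bar>)"
      unfolding inner_mat_expand by (rule sum_abs)
    also have "\<dots> \<le> (\<Sum>i\<in>UNIV. \<Sum>k\<in>UNIV. \<bar>M0$i$k * X$k$i\<bar>)"
      by (intro sum_mono sum_abs)
    also have "\<dots> \<le> (\<Sum>i\<in>UNIV. \<Sum>k\<in>UNIV. \<bar>M0$i$k\<bar> * a)"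
      by (intro sum_mono) (simp add: abs_mult mult_left_mono ent)
    finally show ?thesis .
  qed
  then have "\<forall>X\<in>P. - (\<Sum>i\<in>UNIV. \<Sum>k\<in>UNIV. \<bar>M0$i$k\<bar> * a) \<le> inner_mat M0 X"
    by (smt (verit))
  then show ?thesis by blast
qed

theorem lemma5p2:
  fixes \<M> :: "(real^'n^'n) set" and B :: "real^'n^'n"
  assumes "\<forall>M\<in>\<M>. sym_mat M"
    and "sym_mat B"
    and "ROG (S_cone \<M>)"
  shows "(\<forall>M0. sym_mat M0 \<longrightarrow>
            (\<exists>c. \<forall>X. sym_mat X \<and> psd X \<and> (\<forall>M\<in>\<M>. 0 \<le> inner_mat M X) \<and> inner_mat B X = 1
                     \<longrightarrow> c \<le> inner_mat M0 X) \<longrightarrow>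
            Inf ((\<lambda>x. ereal (x \<bullet> (M0 *v x))) `
                   {x. (\<forall>M\<in>\<M>. 0 \<le> x \<bullet> (M *v x)) \<and> x \<bullet> (B *v x) = 1})
          = Inf ((\<lambda>X. ereal (inner_mat M0 X)) `
                   {X. sym_mat X \<and> (\<forall>M\<in>\<M>. 0 \<le> inner_mat M X) \<and> inner_mat B X = 1 \<and> psd X}))
       \<and> (bounded {X. sym_mat X \<and> (\<forall>M\<in>\<M>. 0 \<le> inner_mat M X) \<and> inner_mat B X = 1 \<and> psd X} \<longrightarrow>
          (\<forall>M0. sym_mat M0 \<longrightarrow>
            Inf ((\<lambda>x. ereal (x \<bullet> (M0 *v x))) `
                   {x. (\<forall>M\<in>\<M>. 0 \<le> x \<bullet> (M *v x)) \<and> x \<bullet> (B *v x) = 1})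
          = Inf ((\<lambda>X. ereal (inner_mat M0 X)) `
                   {X. sym_mat X \<and> (\<forall>M\<in>\<M>. 0 \<le> inner_mat M X) \<and> inner_mat B X = 1 \<and> psd X})))"
proof (intro conjI impI allI)
  fix M0 :: "real^'n^'n"
  assume "\<exists>c. \<forall>X. sym_mat X \<and> psd X \<and> (\<forall>M\<in>\<M>. 0 \<le> inner_mat M X) \<and> inner_mat B X = 1
                     \<longrightarrow> c \<le> inner_mat M0 X"
  then obtain c where "\<forall>X. sym_mat X \<and> psd X \<and> (\<forall>M\<in>\<M>. 0 \<le> inner_mat M X) \<and> inner_mat B X = 1
                     \<longrightarrow> c \<le> inner_mat M0 X" by blast
  from eq_main[OF assms(3) this] show "Inf ((\<lambda>x. ereal (x \<bullet> (M0 *v x))) `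
                   {x. (\<forall>M\<in>\<M>. 0 \<le> x \<bullet> (M *v x)) \<and> x \<bullet> (B *v x) = 1})
          = Inf ((\<lambda>X. ereal (inner_mat M0 X)) `
                   {X. sym_mat X \<and> (\<forall>M\<in>\<M>. 0 \<le> inner_mat M X) \<and> inner_mat B X = 1 \<and> psd X})" .
next
  fix M0 :: "real^'n^'n"
  assume bdd: "bounded {X. sym_mat X \<and> (\<forall>M\<in>\<M>. 0 \<le> inner_mat M X) \<and> inner_mat B X = 1 \<and> psd X}"
  obtain c where "\<forall>X\<in>{X. sym_mat X \<and> (\<forall>M\<in>\<M>. 0 \<le> inner_mat M X) \<and> inner_mat B X = 1 \<and> psd X}. c \<le> inner_mat M0 X"
    using bounded_lb[OF bdd] by blast
  then have "\<forall>X. sym_mat X \<and> psd X \<and> (\<forall>M\<in>\<M>. 0 \<le> inner_mat M X) \<and> inner_mat B X = 1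
                     \<longrightarrow> c \<le> inner_mat M0 X" by blast
  from eq_main[OF assms(3) this] show "Inf ((\<lambda>x. ereal (x \<bullet> (M0 *v x))) `
                   {x. (\<forall>M\<in>\<M>. 0 \<le> x \<bullet> (M *v x)) \<and> x \<bullet> (B *v x) = 1})
          = Inf ((\<lambda>X. ereal (inner_mat M0 X)) `
                   {X. sym_mat X \<and> (\<forall>M\<in>\<M>. 0 \<le> inner_mat M X) \<and> inner_mat B X = 1 \<and> psd X})" .
qed

end
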